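(* Let $d\ge2$, let $\mathbf A,\mathbf B\in\overline{\mathbb Q}[t]$ be nonzero coprime polynomials, $\mathbf c=\mathbf A/\mathbf B$, let $\lambda\in\overline{\mathbb Q}^*$ and let $|\cdot|_v$ be an absolute value on $\overline{\mathbb Q}$. Let $m\le1\le M$ be positive real numbers with $m\le|\lambda|_v\le M$. Then for all integers $1\le n_0\le n$, $$\left|\frac{\log M_{n,v}(\lambda)}{d^n}-\frac{\log M_{n_0,v}(\lambda)}{d^{n_0}}\right|\le\frac{\log(2M)-\log m}{d^{n_0}(d-1)}.$$
   Context: The polynomials $\mathbf A_{\mathbf c,n},\mathbf B_{\mathbf c,n}$ are defined by: $\mathbf A_{\mathbf c,0}=\mathbf A$, $\mathbf B_{\mathbf c,0}=\mathbf B$; if $\mathbf A(0)\neq0$ then $\mathbf A_{\mathbf c,1}=\mathbf A^d+t\mathbf B^d$, $\mathbf B_{\mathbf c,1}=\mathbf A\mathbf B^{d-1}$, while if $\mathbf A(0)=0$ then $\mathbf A_{\mathbf c,1}=(\mathbf A^d+t\mathbf B^d)/t$, $\mathbf B_{\mathbf c,1}=\mathbf A\mathbf B^{d-1}/t$; for $n\ge1$, $\mathbf A_{\mathbf c,n+1}=\mathbf A_{\mathbf c,n}^d+t\mathbf B_{\mathbf c,n}^d$, $\mathbf B_{\mathbf c,n+1}=\mathbf A_{\mathbf c,n}\mathbf B_{\mathbf c,n}^{d-1}$. Then $M_{n,v}(\lambda)=\max\{|\mathbf A_{\mathbf c,n}(\lambda)|_v,|\mathbf B_{\mathbf c,n}(\lambda)|_v\}$.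 *)

theory Defs
  imports "HOL-Computational_Algebra.Computational_Algebra"
begin

text \<open>The algebraic closure of Q is modelled as the set of algebraic complex numbers;
  polynomials over it are complex polynomials all of whose coefficients are algebraic.\<close>

definition alg_poly :: "complex poly \<Rightarrow> bool" where
  "alg_poly p \<longleftrightarrow> (\<forall>i. algebraic (coeff p i))"

definition abs_value_alg :: "(complex \<Rightarrow> real) \<Rightarrow> bool" where
  "abs_value_alg v \<longleftrightarrow>
     (\<forall>x. algebraic x \<longrightarrow> v x \<ge> 0) \<and>
     (\<forall>x. algebraic x \<longrightarrow> (v x = 0 \<longleftrightarrow> x = 0)) \<and>
     (\<forall>x y. algebraic x \<longrightarrow> algebraic y \<longrightarrow> v (x * y) = v x * v y) \<and>
     (\<forall>x y. algebraic x \<longrightarrow> algebraic y \<longrightarrow> v (x + y) \<le> v x + v y)"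

fun ABseq :: "nat \<Rightarrow> complex poly \<Rightarrow> complex poly \<Rightarrow> nat \<Rightarrow> complex poly \<times> complex poly" where
  "ABseq d A B 0 = (A, B)"
| "ABseq d A B (Suc 0) =
     (if poly A 0 \<noteq> 0 then (A ^ d + [:0, 1:] * B ^ d, A * B ^ (d - 1))
      else ((A ^ d + [:0, 1:] * B ^ d) div [:0, 1:], (A * B ^ (d - 1)) div [:0, 1:]))"
| "ABseq d A B (Suc (Suc n)) =
     (let (a, b) = ABseq d A B (Suc n) in (a ^ d + [:0, 1:] * b ^ d, a * b ^ (d - 1)))"

definition Mnv :: "(complex \<Rightarrow> real) \<Rightarrow> nat \<Rightarrow> complex poly \<Rightarrow> complex poly \<Rightarrow> nat \<Rightarrow> complex \<Rightarrow> real" where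
  "Mnv v d A B n lam = max (v (poly (fst (ABseq d A B n)) lam)) (v (poly (snd (ABseq d A B n)) lam))"

end

theory Submission
  imports Defs "HOL-Computational_Algebra.Computational_Algebra" "HOL-Algebra.Algebraic_Closure_Type"
begin

abbreviation CR :: "complex ring" where "CR \<equiv> ring_of_type_algebra"

lemma CR_simps [simp]: "carrier CR = UNIV" "monoid.mult CR x y = x * y" "add CR x y = x + y"
  "one CR = 1" "zero CR = 0"
  by (auto simp: ring_of_type_algebra_def)

lemma fieldCR: "field CR" by rule
lemma domainCR: "domain CR" using fieldCR field.axioms(1) by blast
interpretation CRf: ring CR using fieldCR by (simp add: cring.axioms(1) domain.axioms(1) field.axioms(1))

lemma CR_ainv [simp]: "a_inv CR x = - (x::complex)"
  by (rule CRf.add.inv_equality) auto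

lemma CR_minv [simp]: "(x::complex) \<noteq> 0 \<Longrightarrow> m_inv CR x = inverse x"
  by (rule monoid.inv_char[OF CRf.monoid_axioms]) (auto)

lemma CR_pow [simp]: "x [^]\<^bsub>CR\<^esub> (n::nat) = (x::complex) ^ n"
  by (induction n) auto

lemma CR_eval: "CRf.eval p x = poly (Poly (rev p)) x"
proof (induction p)
  case Nil then show ?case by simp
next
  case (Cons a p)
  have "poly (Poly (rev p @ [a])) x = poly (Poly (rev p)) x + a * x ^ length p"
    by (simp add: Poly_append poly_monom)
  then show ?case using Cons by simp
qed

lemma Rats_subfield: "subfield (\<rat> :: complex set) CR"
  by (rule field.subfieldI'[OF fieldCR CRf.subringI]) auto

lemma alg_to_CR:
  assumes "algebraic (x::complex)" shows "(CRf.algebraic over \<rat>) x"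
proof -
  obtain p where p: "\<forall>i. Polynomial.coeff p i \<in> \<rat>" "p \<noteq> 0" "poly p x = 0"
    using assms by (auto simp: algebraic_altdef)
  show ?thesis
  proof (rule CRf.algebraicI[of "rev (coeffs p)"])
    show "rev (coeffs p) \<in> carrier (\<rat>[X]\<^bsub>CR\<^esub>)"
      using p by (auto simp: univ_poly_def polynomial_def coeffs_def hd_rev last_map)
    show "rev (coeffs p) \<noteq> []" using p by simp
    show "CRf.eval (rev (coeffs p)) x = \<zero>\<^bsub>CR\<^esub>"
      using p by (simp add: CR_eval)
  qed
qed

lemma CR_to_alg:
  assumes "(CRf.algebraic over \<rat>) (x::complex)" shows "algebraic x"
proof -
  obtain p where p: "p \<in> carrier (\<rat>[X]\<^bsub>CR\<^esub>)" "p \<noteq> []" "CRf.eval p x = \<zero>\<^bsub>CR\<^esub>"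
    using domain.algebraicE[OF domainCR subfieldE(1)[OF Rats_subfield] _ assms] by auto
  have set: "set p \<subseteq> \<rat>" and hd: "hd p \<noteq> 0"
    using p by (auto simp: univ_poly_def polynomial_def)
  have "Poly (rev p) \<noteq> 0"
  proof
    assume "Poly (rev p) = 0"
    then obtain n where n: "rev p = replicate n 0" by (auto simp: Poly_eq_0)
    then have "last (rev p) = 0" using p(2) by (cases n) auto
    then show False using hd p(2) by (simp add: last_rev)
  qed
  moreover have "\<forall>i. Polynomial.coeff (Poly (rev p)) i \<in> \<rat>"
    using set by (auto simp: nth_default_def) (metis length_rev nth_mem set_rev subsetD)
  ultimately show ?thesis using p(3) unfolding algebraic_altdef CR_eval by (intro exI[of _ "Poly (rev p)"]) simp
qed

lemma algebraic_add: "algebraic (x::complex) \<Longrightarrow> algebraic y \<Longrightarrow> algebraic (x + y)"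
  and algebraic_mult: "algebraic (x::complex) \<Longrightarrow> algebraic y \<Longrightarrow> algebraic (x * y)"
proof -
  assume x: "algebraic x" and y: "algebraic y"
  have S: "subfield {z \<in> carrier CR. (CRf.algebraic over \<rat>) z} CR"
    by (rule field.subfield_of_algebraics[OF fieldCR Rats_subfield])
  have xs: "x \<in> {z \<in> carrier CR. (CRf.algebraic over \<rat>) z}" using alg_to_CR[OF x] by simp
  have ys: "y \<in> {z \<in> carrier CR. (CRf.algebraic over \<rat>) z}" using alg_to_CR[OF y] by simp
  show "algebraic (x + y)" using subringE(7)[OF subfieldE(1)[OF S] xs ys] CR_to_alg by auto
  show "algebraic (x * y)" using subringE(6)[OF subfieldE(1)[OF S] xs ys] CR_to_alg by auto
qed


lemma alg_poly_pCons: "alg_poly (pCons a p) \<Longrightarrow> algebraic a \<and> alg_poly p"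
  unfolding alg_poly_def by (metis coeff_pCons_0 coeff_pCons_Suc)

lemma algebraic_1' [simp]: "algebraic (1::complex)"
  by (rule rat_imp_algebraic) simp

lemma alg_poly_eval: "alg_poly p \<Longrightarrow> algebraic x \<Longrightarrow> algebraic (poly p (x::complex))"
proof (induction p rule: pCons_induct)
  case 0 then show ?case by simp
next
  case (pCons a p)
  then show ?case using alg_poly_pCons[OF pCons.prems(1)]
    by (simp add: algebraic_add algebraic_mult)
qed

lemma algebraic_power: "algebraic (x::complex) \<Longrightarrow> algebraic (x ^ n)"
  by (induction n) (auto simp: algebraic_mult)

lemma coprime_no_common_root:
  assumes "coprime (A::complex poly) B" "poly A x = 0" "poly B x = 0" shows False
proof -
  have "[:-x,1:] dvd A" "[:-x,1:] dvd B" using assms by (simp_all add: poly_eq_0_iff_dvd)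
  then have "is_unit [:-x,1:]" using assms(1) coprime_common_divisor by blast
  then show False by (simp add: is_unit_poly_iff)
qed

lemma div_X_eval:
  assumes "poly P 0 = 0" "(x::complex) \<noteq> 0"
  shows "poly (P div [:0,1:]) x = poly P x / x"
proof -
  have "[:0,1:] dvd P" using assms poly_eq_0_iff_dvd[of P 0] by simp
  then have "P = (P div [:0,1:]) * [:0,1:]" by (metis dvd_div_mult_self)
  then have "poly P x = poly (P div [:0,1:]) x * poly [:0,1:] x" by (metis poly_mult)
  then have "poly P x = poly (P div [:0,1:]) x * x" by simp
  then show ?thesis using assms by simp
qed

context
  fixes v :: "complex \<Rightarrow> real"
  assumes v: "abs_value_alg v"
begin

lemma v_nonneg: "algebraic x \<Longrightarrow> v x \<ge> 0" using v unfolding abs_value_alg_def by blast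
lemma v_zero: "algebraic x \<Longrightarrow> v x = 0 \<longleftrightarrow> x = 0" using v unfolding abs_value_alg_def by blast
lemma v_mult: "algebraic x \<Longrightarrow> algebraic y \<Longrightarrow> v (x*y) = v x * v y" using v unfolding abs_value_alg_def by blast
lemma v_tri: "algebraic x \<Longrightarrow> algebraic y \<Longrightarrow> v (x+y) \<le> v x + v y" using v unfolding abs_value_alg_def by blast

lemma v_one: "v 1 = 1"
proof -
  have "v 1 = v 1 * v 1" using v_mult[of 1 1] by simp
  moreover have "v 1 \<noteq> 0" using v_zero[of 1] by simp
  ultimately show ?thesis by (metis mult_cancel_left1)
qed

lemma v_neg: "algebraic x \<Longrightarrow> v (-x) = v x"
proof -
  have m1: "algebraic (-1::complex)" by simp
  have "v (-1) * v (-1) = 1" using v_mult[OF m1 m1] v_one by simp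
  moreover have "v (-1) \<ge> 0" using v_nonneg[OF m1] .
  ultimately have "v (-1) = 1" using power2_eq_1_iff[of "v (-1)"] by (auto simp: power2_eq_square)
  moreover assume "algebraic x"
  ultimately show ?thesis using v_mult[OF m1, of x] by simp
qed

lemma v_pow: "algebraic x \<Longrightarrow> v (x ^ n) = v x ^ n"
  by (induction n) (auto simp: v_one v_mult algebraic_power)

lemma v_rev: "algebraic x \<Longrightarrow> algebraic y \<Longrightarrow> v x - v y \<le> v (x + y)"
proof -
  assume x: "algebraic x" and y: "algebraic y"
  have "v x = v ((x + y) + (-y))" by simp
  also have "\<dots> \<le> v (x+y) + v (-y)" by (rule v_tri) (auto simp: x y algebraic_add)
  finally show ?thesis using v_neg[OF y] by simp
qed

end


lemma pow_split: "1 \<le> d \<Longrightarrow> z * z^(d-1) = (z::real)^d" by (cases d) auto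

lemma step_real:
  fixes x y l p m M :: real and d :: nat
  assumes d: "d \<ge> 1" and xy: "x \<ge> 0" "y \<ge> 0" "max x y > 0"
    and mM: "0 < m" "m \<le> 1" "1 \<le> M" "m \<le> l" "l \<le> M"
    and p1: "p \<ge> x^d - l*y^d" and p2: "p \<ge> l*y^d - x^d" and p3: "p \<le> x^d + l*y^d"
  shows "m/(2*M) * (max x y)^d \<le> max p (x*y^(d-1))" "max p (x*y^(d-1)) \<le> 2*M * (max x y)^d"
proof -
  define Z where "Z = max x y"
  have Z: "x \<le> Z" "y \<le> Z" "Z > 0" using xy by (auto simp: Z_def)
  have xd: "x^d \<le> Z^d" "y^d \<le> Z^d" using Z xy by (auto intro: power_mono)
  have Md: "M * Z^d \<ge> 0" using Z mM by simp
  have q: "x*y^(d-1) \<le> Z * Z^(d-1)" using Z xy by (intro mult_mono power_mono) auto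
  have ZZ: "Z * Z^(d-1) = Z^d" using pow_split[OF d] by simp
  have "l*y^d \<le> M * Z^d" using xd mM xy by (intro mult_mono) auto
  then have "p \<le> Z^d + M*Z^d" using p3 xd by linarith
  also have "\<dots> \<le> 2*M*Z^d" using mM Z by (simp add: algebra_simps)
  finally have up1: "p \<le> 2*M*Z^d" .
  have "Z^d \<le> 2*M*Z^d" using mM Z by (simp add: algebra_simps)
  then show "max p (x*y^(d-1)) \<le> 2*M * (max x y)^d" using up1 q ZZ by (auto simp: Z_def[symmetric])
  have Zd: "Z^d > 0" using Z by simp
  have c1: "m/(2*M) * Z^d \<le> Z^d/2"
  proof -
    have "m/(2*M) \<le> 1/2" using mM by (simp add: field_simps)
    then show ?thesis using Zd by (simp add: mult_right_mono[of _ _ "Z^d"] divide_simps) (smt (verit) mult_right_mono)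
  qed
  have c2: "m/(2*M) * Z^d \<le> Z^d/(2*M)"
    using mM Zd by (simp add: field_simps mult_right_mono)
  have c3: "m/(2*M) * Z^d \<le> m * Z^d/2"
    using mM Zd by (simp add: field_simps mult_left_mono)
  have "m/(2*M) * Z^d \<le> max p (x*y^(d-1))"
  proof (cases "y \<le> x")
    case True
    then have Zx: "Z = x" by (simp add: Z_def)
    show ?thesis
    proof (cases "M*y^d \<le> x^d/2")
      case True
      have "l*y^d \<le> M*y^d" using mM xy by (simp add: mult_right_mono)
      then have "p \<ge> x^d/2" using p1 True by linarith
      then show ?thesis using c1 Zx by (metis le_max_iff_disj order_trans)
    next
      case False
      have "y^d = y * y^(d-1)" using pow_split[OF d] by simp
      also have "\<dots> \<le> x * y^(d-1)" using True xy by (simp add: mult_right_mono)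
      finally have "y^d \<le> x*y^(d-1)" .
      moreover have "y^d > Z^d/(2*M)" using False Zx mM by (simp add: field_simps)
      ultimately show ?thesis using c2 by (metis le_max_iff_disj order_trans less_imp_le)
    qed
  next
    case False
    then have Zy: "Z = y" by (simp add: Z_def)
    show ?thesis
    proof (cases "x^d \<le> m*y^d/2")
      case True
      have "m*y^d \<le> l*y^d" using mM xy by (simp add: mult_right_mono)
      then have "p \<ge> m*y^d/2" using p2 True by linarith
      then show ?thesis using c3 Zy by (metis le_max_iff_disj order_trans)
    next
      case False
      have "x^d = x * x^(d-1)" using pow_split[OF d] by simp
      also have "\<dots> \<le> x * y^(d-1)" using \<open>\<not> y \<le> x\<close> xy by (intro mult_left_mono power_mono) auto
      finally have "x^d \<le> x*y^(d-1)" .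
      moreover have "x^d > m*Z^d/2" using False Zy by simp
      ultimately show ?thesis using c3 by (metis le_max_iff_disj order_trans less_imp_le)
    qed
  qed
  then show "m/(2*M) * (max x y)^d \<le> max p (x*y^(d-1))" by (simp add: Z_def)
qed

lemma step_ln:
  fixes Z Q m M :: real and d :: nat
  assumes "Z > 0" "0 < m" "m \<le> 1" "1 \<le> M"
    and "m/(2*M) * Z^d \<le> Q" "Q \<le> 2*M * Z^d"
  shows "\<bar>ln Q - d * ln Z\<bar> \<le> ln (2*M) - ln m"
proof -
  have pos: "m/(2*M) * Z^d > 0" using assms by simp
  then have Q: "Q > 0" using assms by linarith
  have "ln Q \<le> ln (2*M * Z^d)" using assms Q by simp
  also have "\<dots> = ln (2*M) + d * ln Z" using assms by (simp add: ln_mult ln_realpow)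
  finally have u: "ln Q \<le> ln (2*M) + d * ln Z" .
  have "ln (m/(2*M) * Z^d) \<le> ln Q" using ln_le_cancel_iff[of "m/(2*M) * Z^d" Q] pos Q assms(5) by blast
  moreover have "ln (m/(2*M) * Z^d) = ln m - ln (2*M) + d * ln Z" using assms by (simp add: ln_mult ln_div ln_realpow)
  ultimately have l: "ln m - ln (2*M) + d * ln Z \<le> ln Q" by simp
  have "ln m \<le> 0" using assms by simp
  then show ?thesis using u l by linarith
qed


lemma ABseq_SS:
  "fst (ABseq d A B (Suc (Suc n))) = fst (ABseq d A B (Suc n)) ^ d + [:0,1:] * snd (ABseq d A B (Suc n)) ^ d"
  "snd (ABseq d A B (Suc (Suc n))) = fst (ABseq d A B (Suc n)) * snd (ABseq d A B (Suc n)) ^ (d-1)"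
  by (simp_all add: case_prod_beta Let_def)

lemma no_common_zero:
  fixes a b lam :: complex
  assumes "d \<ge> 2" "lam \<noteq> 0" "a^d + lam * b^d = 0" "a * b^(d-1) = 0"
  shows "a = 0 \<and> b = 0"
proof -
  have "a = 0 \<or> b = 0" using assms(4) by auto
  then show ?thesis using assms by (auto simp: power_0_left)
qed

theorem proposition5p2:
  fixes d :: nat and A B :: "complex poly" and lam :: complex and v :: "complex \<Rightarrow> real"
    and m M :: real and n0 n :: nat
  assumes "d \<ge> 2"
    and "alg_poly A" and "alg_poly B" and "A \<noteq> 0" and "B \<noteq> 0" and "coprime A B"
    and "algebraic lam" and "lam \<noteq> 0"
    and "abs_value_alg v"
    and "0 < m" and "m \<le> 1" and "1 \<le> M"
    and "m \<le> v lam" and "v lam \<le> M"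
    and "1 \<le> n0" and "n0 \<le> n"
  shows "\<bar>ln (Mnv v d A B n lam) / real d ^ n - ln (Mnv v d A B n0 lam) / real d ^ n0\<bar>
           \<le> (ln (2 * M) - ln m) / (real d ^ n0 * (real d - 1))"
proof -
  note v = assms(9)
  define a where "a k = poly (fst (ABseq d A B k)) lam" for k
  define b where "b k = poly (snd (ABseq d A B k)) lam" for k
  have Mab: "Mnv v d A B k lam = max (v (a k)) (v (b k))" for k
    by (simp add: Mnv_def a_def b_def)
  have rec: "a (Suc (Suc j)) = a (Suc j)^d + lam * b (Suc j)^d"
            "b (Suc (Suc j)) = a (Suc j) * b (Suc j)^(d-1)" for j
    unfolding a_def b_def ABseq_SS by simp_all
  have algA: "algebraic (poly A lam)" and algB: "algebraic (poly B lam)"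
    using alg_poly_eval assms by auto
  have base: "algebraic (a 1) \<and> algebraic (b 1) \<and> \<not> (a 1 = 0 \<and> b 1 = 0)"
  proof -
    define P where "P = A ^ d + [:0, 1:] * B ^ d"
    define Q where "Q = A * B ^ (d - 1)"
    have e1: "poly P lam = poly A lam ^ d + lam * poly B lam ^ d" unfolding P_def by simp
    have e2: "poly Q lam = poly A lam * poly B lam ^ (d-1)" unfolding Q_def by simp
    have aP: "algebraic (poly P lam)" "algebraic (poly Q lam)" unfolding e1 e2
      using algA algB assms(7) by (simp_all add: algebraic_add algebraic_mult algebraic_power)
    have nz: "\<not> (poly P lam = 0 \<and> poly Q lam = 0)"
    proof
      assume "poly P lam = 0 \<and> poly Q lam = 0"
      then have "poly A lam = 0 \<and> poly B lam = 0"
        using no_common_zero[OF assms(1) assms(8), of "poly A lam" "poly B lam"] unfolding e1 e2 by blast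
      then show False using coprime_no_common_root[OF assms(6)] by blast
    qed
    have AB1: "ABseq d A B 1 = (if poly A 0 \<noteq> 0 then (P, Q) else (P div [:0, 1:], Q div [:0, 1:]))"
      unfolding P_def Q_def One_nat_def ABseq.simps(2) ..
    show ?thesis
    proof (cases "poly A 0 \<noteq> 0")
      case True
      then have "a 1 = poly P lam" "b 1 = poly Q lam" unfolding a_def b_def AB1 by simp_all
      then show ?thesis using aP nz by simp
    next
      case False
      have z: "poly P 0 = 0" "poly Q 0 = 0" using False assms(1) unfolding P_def Q_def by (simp_all add: zero_power)
      have "a 1 = poly P lam / lam" "b 1 = poly Q lam / lam"
        unfolding a_def b_def AB1 using False div_X_eval[OF z(1) assms(8)] div_X_eval[OF z(2) assms(8)] by simp_all
      then show ?thesis using aP nz assms(7,8)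
        by (simp add: divide_inverse algebraic_mult algebraic_inverse)
    qed
  qed
  have ind: "algebraic (a (Suc j)) \<and> algebraic (b (Suc j)) \<and> \<not> (a (Suc j) = 0 \<and> b (Suc j) = 0)" for j
  proof (induction j)
    case 0 then show ?case using base by simp
  next
    case (Suc j)
    have al: "algebraic (a (Suc (Suc j)))" "algebraic (b (Suc (Suc j)))" unfolding rec
      using Suc.IH assms(7) by (simp_all add: algebraic_add algebraic_mult algebraic_power)
    have "\<not> (a (Suc (Suc j)) = 0 \<and> b (Suc (Suc j)) = 0)"
    proof
      assume "a (Suc (Suc j)) = 0 \<and> b (Suc (Suc j)) = 0"
      then show False using no_common_zero[OF assms(1) assms(8), of "a (Suc j)" "b (Suc j)"] Suc.IH
        unfolding rec by blast
    qed
    then show ?case using al by blast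
  qed
  define C where "C = ln (2*M) - ln m"
  have C0: "C \<ge> 0" using assms by (simp add: C_def)
  have Mpos: "Mnv v d A B (Suc j) lam > 0" for j
  proof -
    have "v (a (Suc j)) > 0 \<or> v (b (Suc j)) > 0"
    proof -
      have "v (a (Suc j)) \<ge> 0" "v (b (Suc j)) \<ge> 0" using ind[of j] v_nonneg[OF v] by auto
      moreover have "v (a (Suc j)) \<noteq> 0 \<or> v (b (Suc j)) \<noteq> 0" using ind[of j] v_zero[OF v] by auto
      ultimately show ?thesis by linarith
    qed
    then show ?thesis by (auto simp: Mab)
  qed
  have stepb: "\<bar>ln (Mnv v d A B (Suc (Suc j)) lam) - d * ln (Mnv v d A B (Suc j) lam)\<bar> \<le> C" for j
  proof -
    let ?a = "a (Suc j)" and ?b = "b (Suc j)"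
    have aa: "algebraic ?a" "algebraic ?b" using ind by auto
    have a1: "algebraic (?a^d)" "algebraic (lam * ?b^d)"
      using aa assms(7) by (auto simp: algebraic_power algebraic_mult)
    define p where "p = v (?a^d + lam * ?b^d)"
    have vad: "v (?a^d) = v ?a ^ d" using v_pow[OF v aa(1)] .
    have vbd: "v (lam * ?b^d) = v lam * v ?b ^ d"
      using v_mult[OF v assms(7) algebraic_power[OF aa(2)]] v_pow[OF v aa(2)] by simp
    have p1: "p \<ge> v ?a ^ d - v lam * v ?b ^ d" using v_rev[OF v a1] vad vbd by (simp add: p_def)
    have p2: "p \<ge> v lam * v ?b ^ d - v ?a ^ d" using v_rev[OF v a1(2) a1(1)] vad vbd by (simp add: p_def add.commute)
    have p3: "p \<le> v ?a ^ d + v lam * v ?b ^ d" using v_tri[OF v a1] vad vbd by (simp add: p_def)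
    have q: "v (?a * ?b^(d-1)) = v ?a * v ?b ^ (d-1)"
      using v_mult[OF v aa(1) algebraic_power[OF aa(2)]] v_pow[OF v aa(2)] by simp
    have Z: "max (v ?a) (v ?b) > 0" using Mpos[of j] by (simp add: Mab)
    have d1: "d \<ge> 1" using assms(1) by simp
    note sr = step_real[OF d1 v_nonneg[OF v aa(1)] v_nonneg[OF v aa(2)] Z assms(10,11,12,13,14) p1 p2 p3]
    have MS: "Mnv v d A B (Suc (Suc j)) lam = max p (v ?a * v ?b ^ (d-1))"
      unfolding Mab rec p_def q ..
    show ?thesis unfolding MS C_def using step_ln[OF Z assms(10,11,12) sr] by (simp add: Mab)
  qed
  define L where "L k = ln (Mnv v d A B k lam) / real d ^ k" for k
  have dpos: "real d > 1" using assms(1) by simp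
  have stepL: "\<bar>L (Suc k) - L k\<bar> \<le> C / real d ^ Suc k" if k1: "k \<ge> 1" for k
  proof -
    obtain j where k: "k = Suc j" using k1 by (cases k) auto
    have "L (Suc k) - L k = (ln (Mnv v d A B (Suc k) lam) - d * ln (Mnv v d A B k lam)) / real d ^ Suc k"
      using dpos by (simp add: L_def field_simps)
    then show ?thesis using stepb[of j] dpos k by (simp add: abs_divide divide_right_mono)
  qed
  have tel: "\<bar>L (n0 + j) - L n0\<bar> \<le> C * (1 / real d ^ n0 - 1 / real d ^ (n0 + j)) / (real d - 1)" for j
  proof (induction j)
    case 0 then show ?case by simp
  next
    case (Suc j)
    have e: "C * (1 / real d ^ n0 - 1 / real d ^ (n0 + Suc j)) / (real d - 1)
        = C * (1 / real d ^ n0 - 1 / real d ^ (n0 + j)) / (real d - 1) + C / real d ^ Suc (n0 + j)"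
      using dpos by (simp add: field_simps)
    have "\<bar>L (n0 + Suc j) - L n0\<bar> \<le> \<bar>L (Suc (n0 + j)) - L (n0 + j)\<bar> + \<bar>L (n0 + j) - L n0\<bar>" by simp
    also have "\<dots> \<le> C / real d ^ Suc (n0 + j) + C * (1 / real d ^ n0 - 1 / real d ^ (n0 + j)) / (real d - 1)"
      using stepL[of "n0 + j"] assms(15) Suc.IH by simp
    finally show ?case using e by simp
  qed
  obtain j where nj: "n = n0 + j" using assms(16) le_Suc_ex by blast
  have "C * (1 / real d ^ n0 - 1 / real d ^ (n0 + j)) / (real d - 1) \<le> C * (1 / real d ^ n0) / (real d - 1)"
    using C0 dpos by (intro divide_right_mono mult_left_mono) auto
  also have "\<dots> = C / (real d ^ n0 * (real d - 1))" by simp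
  finally show ?thesis using tel[of j] nj by (simp add: L_def C_def)
qed
end
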